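(* Let $I_0\subseteq[n]$ and $\bar J_0\subseteq[\bar d]$ be nonempty. (b) If $\mathcal M=\{M_{I,\bar J}\}$ is an $(n,d)$-matching ensemble, then deleting from every $M_{I,\bar J}$ all vertices outside $I_0\sqcup\bar J_0$ (and removing duplicates) yields exactly the collection $\{M_{I,\bar J}: I\subseteq I_0,\ \bar J\subseteq\bar J_0,\ |I|=|\bar J|\}$, which contains exactly one bijection for each such pair and is a matching ensemble on $I_0\sqcup\bar J_0$. (c) If $\mathcal T$ is an extended $(n,d)$-tope arrangement, then its $(I_0,\bar J_0)$-minor is an extended $(|I_0|,|\bar J_0|)$-tope arrangement on $I_0\sqcup\bar J_0$ (i.e. it consists of pairwise compatible topes $I_0\to\bar J_0$, exactly one of each position $v\in\mathbb Z_{\ge0}^{\bar J_0}$ with coordinate sum $|I_0|$). (d) If $\mathcal T$ is an $(n,d)$-pre-trianguloid, then its $(I_0,\bar J_0)$-minor is a pre-trianguloid on $I_0\sqcup\bar J_0$.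
   Context: Fix positive integers $n,d$; graphs are subgraphs of the complete bipartite graph with left vertices $[n]$ and right vertices $[\bar d]=\{\bar1,\dots,\bar d\}$, identified with edge sets. $LD,RD$ denote the vectors of left/right vertex degrees; $e_{\bar j}$ is a unit vector; lattice points of $k\Delta^{d-1}$ are vectors in $\mathbb Z_{\ge0}^{[\bar d]}$ with sum $k$. Two acyclic graphs are compatible if whenever both contain a perfect matching between the same $I\subseteq[n]$, $\bar J\subseteq[\bar d]$, these matchings coincide. A tope is a map $T:[n]\to[\bar d]$ (graph $\{(i,T(i))\}$), with position $RD(T)$. An extended $(n,d)$-tope arrangement is a collection of pairwise compatible topes $T_v$, one for each lattice point $v$ of $n\Delta^{d-1}$, with $RD(T_v)=v$. An $(n,d)$-pre-trianguloid is a collection of topes $T_v$, one for each lattice point $v$ of $n\Delta^{d-1}$, with $RD(T_v)=v$ and such that whenever $v-e_{\bar j}=v'-e_{\bar j'}$ (for lattice points $v,v'$ of $n\Delta^{d-1}$), $T_{v'}^{-1}(\bar j)\subseteq T_v^{-1}(\bar j)$. Both notions transfer verbatim to any finite left set and right set in place of $[n],[\bar d]$. The $(I_0,\bar J_0)$-minor of a collection of topes: from each tope remove all vertices outside $I_0\sqcup\bar J_0$, discard the resulting graphs in which some vertex of $I_0$ has degree $0$ (i.e. keep only topes $T$ with $T(I_0)\subseteq\bar J_0$, restricted to $I_0$), and remove duplicates. An $(n,d)$-matching ensemble is a collection of bijections $M_{I,\bar J}:I\to\bar J$ (viewed as matching graphs), one for each $I\subseteq[n],\bar J\subseteq[\bar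 d]$ with $|I|=|\bar J|$, such that (Closure) if $I'\subseteq I$, $\bar J'\subseteq\bar J$ and $M_{I,\bar J}$ contains a perfect matching between $I'$ and $\bar J'$ then $M_{I',\bar J'}\subseteq M_{I,\bar J}$; (Left linkage) if $|I|=|\bar J|+1$, the union of $M_{I',\bar J}$ over $I'\subset I$, $|I'|=|\bar J|$, is a spanning tree on $I\sqcup\bar J$ with every vertex of $\bar J$ of degree 2; (Right linkage) if $|I|+1=|\bar J|$, the union of $M_{I,\bar J'}$ over $\bar J'\subset\bar J$, $|\bar J'|=|I|$, is a spanning tree on $I\sqcup\bar J$ with every vertex of $I$ of degree 2. *)

theory Defs
  imports Main
begin

type_synonym ('a,'b) bgraph = "('a \<times> 'b) set"

definition perfect_matching :: "'a set \<Rightarrow> 'b set \<Rightarrow> ('a,'b) bgraph \<Rightarrow> bool" where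
  "perfect_matching I J M \<longleftrightarrow> M \<subseteq> I \<times> J \<and>
     (\<forall>i\<in>I. \<exists>!j. (i,j) \<in> M) \<and> (\<forall>j\<in>J. \<exists>!i. (i,j) \<in> M)"

definition ldeg :: "('a,'b) bgraph \<Rightarrow> 'a \<Rightarrow> nat" where
  "ldeg G i = card {j. (i,j) \<in> G}"

definition RD :: "('a,'b) bgraph \<Rightarrow> 'b \<Rightarrow> nat" where
  "RD G j = card {i. (i,j) \<in> G}"

definition adj :: "('a,'b) bgraph \<Rightarrow> ('a + 'b) rel" where
  "adj E = {(Inl i, Inr j) | i j. (i,j) \<in> E} \<union> {(Inr j, Inl i) | i j. (i,j) \<in> E}"

definition connected_on :: "'a set \<Rightarrow> 'b set \<Rightarrow> ('a,'b) bgraph \<Rightarrow> bool" where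
  "connected_on I J E \<longleftrightarrow>
     (\<forall>x \<in> Inl ` I \<union> Inr ` J. \<forall>y \<in> Inl ` I \<union> Inr ` J. (x,y) \<in> (adj E)\<^sup>*)"

definition spanning_tree :: "'a set \<Rightarrow> 'b set \<Rightarrow> ('a,'b) bgraph \<Rightarrow> bool" where
  "spanning_tree I J E \<longleftrightarrow> E \<subseteq> I \<times> J \<and> connected_on I J E \<and>
     (\<forall>e\<in>E. \<not> connected_on I J (E - {e}))"

definition compatible :: "('a,'b) bgraph \<Rightarrow> ('a,'b) bgraph \<Rightarrow> bool" where
  "compatible G H \<longleftrightarrow> (\<forall>I J P Q. P \<subseteq> G \<and> perfect_matching I J P \<and>
       Q \<subseteq> H \<and> perfect_matching I J Q \<longrightarrow> P = Q)"

text \<open>Matching ensemble on left set L and right set R, given as a function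
(I,J) \<mapsto> M I J (only its values on I \<subseteq> L, J \<subseteq> R, |I| = |J| matter).\<close>
definition matching_ensemble ::
  "'a set \<Rightarrow> 'b set \<Rightarrow> ('a set \<Rightarrow> 'b set \<Rightarrow> ('a,'b) bgraph) \<Rightarrow> bool" where
  "matching_ensemble L R M \<longleftrightarrow>
     (\<forall>I J. I \<subseteq> L \<longrightarrow> J \<subseteq> R \<longrightarrow> card I = card J \<longrightarrow> perfect_matching I J (M I J)) \<and>
     (\<forall>I J I' J'. I \<subseteq> L \<longrightarrow> J \<subseteq> R \<longrightarrow> card I = card J \<longrightarrow> I' \<subseteq> I \<longrightarrow> J' \<subseteq> J \<longrightarrow>
         (\<exists>P. P \<subseteq> M I J \<and> perfect_matching I' J' P) \<longrightarrow> M I' J' \<subseteq> M I J) \<and>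
     (\<forall>I J. I \<subseteq> L \<longrightarrow> J \<subseteq> R \<longrightarrow> card I = card J + 1 \<longrightarrow>
         (let E = \<Union>{M I' J | I'. I' \<subseteq> I \<and> card I' = card J}
          in spanning_tree I J E \<and> (\<forall>j\<in>J. RD E j = 2))) \<and>
     (\<forall>I J. I \<subseteq> L \<longrightarrow> J \<subseteq> R \<longrightarrow> card I + 1 = card J \<longrightarrow>
         (let E = \<Union>{M I J' | J'. J' \<subseteq> J \<and> card J' = card I}
          in spanning_tree I J E \<and> (\<forall>i\<in>I. ldeg E i = 2)))"

definition tope :: "'a set \<Rightarrow> 'b set \<Rightarrow> ('a,'b) bgraph \<Rightarrow> bool" where
  "tope L R G \<longleftrightarrow> G \<subseteq> L \<times> R \<and> (\<forall>i\<in>L. \<exists>!j. (i,j) \<in> G)"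

definition lattice_points :: "'b set \<Rightarrow> nat \<Rightarrow> ('b \<Rightarrow> nat) set" where
  "lattice_points R k = {v. (\<forall>j. j \<notin> R \<longrightarrow> v j = 0) \<and> sum v R = k}"

definition unitv :: "'b \<Rightarrow> 'b \<Rightarrow> nat" where
  "unitv j = (\<lambda>k. if k = j then 1 else 0)"

definition ext_tope_arrangement ::
  "'a set \<Rightarrow> 'b set \<Rightarrow> (('b \<Rightarrow> nat) \<Rightarrow> ('a,'b) bgraph) \<Rightarrow> bool" where
  "ext_tope_arrangement L R T \<longleftrightarrow>
     (\<forall>v \<in> lattice_points R (card L). tope L R (T v) \<and> RD (T v) = v) \<and>
     (\<forall>v \<in> lattice_points R (card L). \<forall>w \<in> lattice_points R (card L).
        compatible (T v) (T w))"

text \<open>Pre-trianguloid; the condition v - e_j = v' - e_j' (in \<int>^R) is written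
equivalently as v + e_j' = v' + e_j.\<close>
definition pre_trianguloid ::
  "'a set \<Rightarrow> 'b set \<Rightarrow> (('b \<Rightarrow> nat) \<Rightarrow> ('a,'b) bgraph) \<Rightarrow> bool" where
  "pre_trianguloid L R T \<longleftrightarrow>
     (\<forall>v \<in> lattice_points R (card L). tope L R (T v) \<and> RD (T v) = v) \<and>
     (\<forall>v \<in> lattice_points R (card L). \<forall>v' \<in> lattice_points R (card L).
        \<forall>j\<in>R. \<forall>j'\<in>R. (\<forall>k. v k + unitv j' k = v' k + unitv j k) \<longrightarrow>
          {i. (i,j) \<in> T v'} \<subseteq> {i. (i,j) \<in> T v})"

definition tope_minor :: "'a set \<Rightarrow> 'b set \<Rightarrow> ('a,'b) bgraph set \<Rightarrow> ('a,'b) bgraph set" where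
  "tope_minor I0 J0 \<T> = {G \<inter> (I0 \<times> J0) | G. G \<in> \<T> \<and> (\<forall>i\<in>I0. \<exists>j\<in>J0. (i,j) \<in> G)}"

end

theory Submission
  imports Defs
begin

definition tf :: "('a,'b) bgraph \<Rightarrow> 'a \<Rightarrow> 'b" where
  "tf G x = (THE y. (x,y) \<in> G)"

lemma tope_tf_eq:
  assumes "tope L R G" "(x,y) \<in> G" shows "tf G x = y" "x \<in> L" "y \<in> R"
proof -
  show "x \<in> L" "y \<in> R" using assms unfolding tope_def by auto
  then have "\<exists>!y. (x,y) \<in> G" using assms unfolding tope_def by blast
  then show "tf G x = y" using assms(2) unfolding tf_def by (rule the1_equality)
qed

lemma tope_tf:
  assumes "tope L R G" "x \<in> L" shows "(x, tf G x) \<in> G" "tf G x \<in> R"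
proof -
  obtain y where "(x,y) \<in> G" using assms unfolding tope_def by blast
  then show "(x, tf G x) \<in> G" "tf G x \<in> R" using tope_tf_eq[OF assms(1)] by auto
qed

lemma tope_mem: assumes "tope L R G" shows "(x,y) \<in> G \<longleftrightarrow> x \<in> L \<and> tf G x = y"
  by (metis tope_tf(1)[OF assms] tope_tf_eq(1,2)[OF assms])

lemma tope_fiber: assumes "tope L R G" shows "{x. (x,l) \<in> G} = {x\<in>L. tf G x = l}"
  by (auto simp: tope_mem[OF assms])

lemma rd_tf: assumes "tope L R G" shows "RD G l = card {x\<in>L. tf G x = l}"
  unfolding RD_def tope_fiber[OF assms] ..

lemma card_fibers:
  assumes "finite L" "finite C"
  shows "card {x\<in>L. f x \<in> C} = (\<Sum>l\<in>C. card {x\<in>L. f x = l})"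
proof -
  have "{x\<in>L. f x \<in> C} = (\<Union>l\<in>C. {x\<in>L. f x = l})" by auto
  moreover have "card (\<Union>l\<in>C. {x\<in>L. f x = l}) = (\<Sum>l\<in>C. card {x\<in>L. f x = l})"
    using assms by (intro card_UN_disjoint) auto
  ultimately show ?thesis by simp
qed

lemma tope_lp:
  assumes "tope L R G" "finite L" "finite R"
  shows "RD G \<in> lattice_points R (card L)"
proof -
  have "\<forall>j. j \<notin> R \<longrightarrow> RD G j = 0"
  proof (intro allI impI)
    fix j assume "j \<notin> R"
    then have "{x\<in>L. tf G x = j} = {}" using tope_tf(2)[OF assms(1)] by auto
    then show "RD G j = 0" by (simp only: rd_tf[OF assms(1)] card.empty)
  qed
  moreover have "sum (RD G) R = card L"
  proof -
    have "sum (RD G) R = (\<Sum>l\<in>R. card {x\<in>L. tf G x = l})" using rd_tf[OF assms(1)] by simp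
    also have "\<dots> = card {x\<in>L. tf G x \<in> R}" by (rule card_fibers[OF assms(2,3), symmetric])
    also have "{x\<in>L. tf G x \<in> R} = L" using tope_tf[OF assms(1)] by auto
    finally show ?thesis .
  qed
  ultimately show ?thesis unfolding lattice_points_def by simp
qed

lemma cycle_lemma:
  assumes "finite D" "D \<noteq> {}" "\<forall>x\<in>D. g x \<in> h ` D"
  shows "\<exists>K C. K \<subseteq> D \<and> K \<noteq> {} \<and> bij_betw g K C \<and> bij_betw h K C"
proof -
  define S where "S = h ` D"
  define sel where "sel l = (SOME x. x \<in> D \<and> h x = l)" for l
  have sel: "sel l \<in> D \<and> h (sel l) = l" if "l \<in> S" for l
    unfolding sel_def by (rule someI_ex) (use that S_def in auto)
  define \<phi> where "\<phi> l = g (sel l)" for l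
  have phiS: "\<phi> l \<in> S" if "l \<in> S" for l
    using sel[OF that] assms(3) unfolding \<phi>_def S_def by auto
  define P where "P C \<longleftrightarrow> C \<subseteq> S \<and> C \<noteq> {} \<and> \<phi> ` C \<subseteq> C" for C
  have "P S" unfolding P_def S_def using assms(2) phiS S_def by auto
  then obtain C where PC: "P C" and minC: "\<And>C'. P C' \<Longrightarrow> card C \<le> card C'"
    using ex_has_least_nat[of P S card] by auto
  have finS: "finite S" using assms(1) S_def by simp
  have CS: "C \<subseteq> S" and Cne: "C \<noteq> {}" and Ccl: "\<phi> ` C \<subseteq> C" using PC P_def by auto
  have finC: "finite C" using CS finS finite_subset by auto
  have "P (\<phi> ` C)" unfolding P_def using CS Cne Ccl by auto
  then have "card C \<le> card (\<phi> ` C)" using minC by blast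
  then have phiC: "\<phi> ` C = C" by (rule card_seteq[OF finC Ccl])
  then have injphi: "inj_on \<phi> C" using finC by (simp add: eq_card_imp_inj_on)
  define K where "K = sel ` C"
  have KD: "K \<subseteq> D" using sel CS K_def by auto
  have Kne: "K \<noteq> {}" using Cne K_def by auto
  have hK: "h ` K = C"
  proof (rule set_eqI)
    fix l show "l \<in> h ` K \<longleftrightarrow> l \<in> C"
    proof
      assume "l \<in> h ` K" then show "l \<in> C" using sel CS K_def by auto
    next
      assume "l \<in> C" then have "h (sel l) = l" "sel l \<in> K" using sel CS K_def by auto
      then show "l \<in> h ` K" by (metis image_eqI)
    qed
  qed
  have injh: "inj_on h K" unfolding K_def inj_on_def using sel CS by (auto simp: subset_iff)
  have gK: "g ` K = C" unfolding K_def image_image using phiC \<phi>_def by simp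
  have injg: "inj_on g K"
  proof (rule inj_onI)
    fix x y assume "x \<in> K" "y \<in> K" "g x = g y"
    then obtain a b where ab: "a \<in> C" "b \<in> C" "x = sel a" "y = sel b" using K_def by auto
    then have "\<phi> a = \<phi> b" using \<open>g x = g y\<close> \<phi>_def by simp
    then have "a = b" using inj_onD[OF injphi] ab(1,2) by blast
    then show "x = y" using ab by simp
  qed
  show ?thesis by (intro exI[of _ K] exI[of _ C]) (simp add: bij_betw_def KD Kne hK injh gK injg)
qed



definition Pprop :: "'b set \<Rightarrow> ('a,'b) bgraph set \<Rightarrow> bool" where
  "Pprop R X \<longleftrightarrow> (\<forall>G\<in>X. \<forall>H\<in>X. \<forall>j\<in>R. \<forall>j'\<in>R.
     (\<forall>k. RD G k + unitv j' k = RD H k + unitv j k) \<longrightarrow> {i. (i,j) \<in> H} \<subseteq> {i. (i,j) \<in> G})"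

definition Cprop :: "('a,'b) bgraph set \<Rightarrow> bool" where
  "Cprop X \<longleftrightarrow> (\<forall>G\<in>X. \<forall>H\<in>X. compatible G H)"

definition fam :: "'a set \<Rightarrow> 'b set \<Rightarrow> ('a,'b) bgraph set \<Rightarrow> bool" where
  "fam L R X \<longleftrightarrow> (\<forall>G\<in>X. tope L R G) \<and> RD ` X = lattice_points R (card L) \<and> inj_on RD X"

lemma pre_to_set:
  assumes "pre_trianguloid L R T"
  shows "fam L R (T ` lattice_points R (card L)) \<and> Pprop R (T ` lattice_points R (card L))"
proof -
  have rd: "\<And>v. v \<in> lattice_points R (card L) \<Longrightarrow> RD (T v) = v" and tp: "\<And>v. v \<in> lattice_points R (card L) \<Longrightarrow> tope L R (T v)"
    using assms unfolding pre_trianguloid_def by auto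
  have "RD ` T ` lattice_points R (card L) = lattice_points R (card L)"
    unfolding image_image using rd by simp
  moreover have "inj_on RD (T ` lattice_points R (card L))"
    by (rule inj_onI) (use rd in auto)
  ultimately have "fam L R (T ` lattice_points R (card L))" unfolding fam_def using tp by auto
  moreover have "Pprop R (T ` lattice_points R (card L))"
    unfolding Pprop_def using assms rd unfolding pre_trianguloid_def by auto
  ultimately show ?thesis by simp
qed

lemma ext_to_set:
  assumes "ext_tope_arrangement L R T"
  shows "fam L R (T ` lattice_points R (card L)) \<and> Cprop (T ` lattice_points R (card L))"
proof -
  have rd: "\<And>v. v \<in> lattice_points R (card L) \<Longrightarrow> RD (T v) = v" and tp: "\<And>v. v \<in> lattice_points R (card L) \<Longrightarrow> tope L R (T v)"
    using assms unfolding ext_tope_arrangement_def by auto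
  have "RD ` T ` lattice_points R (card L) = lattice_points R (card L)"
    unfolding image_image using rd by simp
  moreover have "inj_on RD (T ` lattice_points R (card L))"
    by (rule inj_onI) (use rd in auto)
  ultimately have "fam L R (T ` lattice_points R (card L))" unfolding fam_def using tp by auto
  moreover have "Cprop (T ` lattice_points R (card L))"
    unfolding Cprop_def using assms unfolding ext_tope_arrangement_def by auto
  ultimately show ?thesis by simp
qed

lemma fam_inv:
  assumes "fam L R X" "v \<in> lattice_points R (card L)"
  shows "inv_into X RD v \<in> X" "RD (inv_into X RD v) = v"
proof -
  have "v \<in> RD ` X" using assms unfolding fam_def by simp
  then show "inv_into X RD v \<in> X" "RD (inv_into X RD v) = v"
    by (auto intro: inv_into_into f_inv_into_f)
qed

lemma fam_image:
  assumes "fam L R X" shows "X = inv_into X RD ` lattice_points R (card L)"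
proof -
  have "inv_into X RD ` RD ` X = X" using assms unfolding fam_def
    by (intro inv_into_image_cancel) auto
  then show ?thesis using assms unfolding fam_def by simp
qed

lemma set_to_pre:
  assumes "fam L R X" "Pprop R X"
  shows "\<exists>T'. pre_trianguloid L R T' \<and> X = T' ` lattice_points R (card L)"
proof (intro exI[of _ "inv_into X RD"] conjI)
  show "X = inv_into X RD ` lattice_points R (card L)" by (rule fam_image[OF assms(1)])
  have A1: "\<forall>v\<in>lattice_points R (card L). tope L R (inv_into X RD v) \<and> RD (inv_into X RD v) = v"
    using fam_inv[OF assms(1)] assms(1) unfolding fam_def by auto
  have A2: "\<forall>v \<in> lattice_points R (card L). \<forall>v' \<in> lattice_points R (card L).
        \<forall>j\<in>R. \<forall>j'\<in>R. (\<forall>k. v k + unitv j' k = v' k + unitv j k) \<longrightarrow>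
          {i. (i,j) \<in> inv_into X RD v'} \<subseteq> {i. (i,j) \<in> inv_into X RD v}"
  proof (intro ballI impI)
    fix v v' j j' assume v: "v \<in> lattice_points R (card L)" and v': "v' \<in> lattice_points R (card L)"
      and j: "j \<in> R" "j' \<in> R" and eq: "\<forall>k. v k + unitv j' k = v' k + unitv j k"
    note a = fam_inv[OF assms(1) v] and b = fam_inv[OF assms(1) v']
    show "{i. (i, j) \<in> inv_into X RD v'} \<subseteq> {i. (i, j) \<in> inv_into X RD v}"
      using assms(2)[unfolded Pprop_def, rule_format, OF a(1) b(1) j(1) j(2)] eq a(2) b(2) by simp
  qed
  show "pre_trianguloid L R (inv_into X RD)"
    unfolding pre_trianguloid_def using A1 A2 by blast
qed

lemma set_to_ext:
  assumes "fam L R X" "Cprop X"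
  shows "\<exists>T'. ext_tope_arrangement L R T' \<and> X = T' ` lattice_points R (card L)"
proof (intro exI[of _ "inv_into X RD"] conjI)
  show "X = inv_into X RD ` lattice_points R (card L)" by (rule fam_image[OF assms(1)])
  have A1: "\<forall>v\<in>lattice_points R (card L). tope L R (inv_into X RD v) \<and> RD (inv_into X RD v) = v"
    using fam_inv[OF assms(1)] assms(1) unfolding fam_def by auto
  have A2: "\<forall>v \<in> lattice_points R (card L). \<forall>w \<in> lattice_points R (card L).
        compatible (inv_into X RD v) (inv_into X RD w)"
    using assms(2) fam_inv[OF assms(1)] unfolding Cprop_def by blast
  show "ext_tope_arrangement L R (inv_into X RD)"
    unfolding ext_tope_arrangement_def using A1 A2 by blast
qed

lemma pm_graph:
  assumes "bij_betw f K C"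
  shows "perfect_matching K C ((\<lambda>x. (x, f x)) ` K)"
  using assms unfolding perfect_matching_def bij_betw_def inj_on_def by auto

lemma tope_eq:
  assumes "tope L R G" "tope L R H" "\<forall>x\<in>L. tf G x = tf H x" shows "G = H"
  using assms by (auto simp: tope_mem[OF assms(1)] tope_mem[OF assms(2)])

lemma fiber_trans:
  assumes G: "tope L R G" and H: "tope L R H" and fin: "finite L"
    and le: "RD G l \<le> RD H l" and x: "x \<in> L" "tf G x \<noteq> tf H x" "tf G x = l"
  shows "\<exists>y\<in>L. tf G y \<noteq> tf H y \<and> tf H y = l"
proof (rule ccontr)
  assume no: "\<not> ?thesis"
  define D where "D = {x\<in>L. tf G x \<noteq> tf H x}"
  have eq: "{y\<in>L. tf H y = l} = {y\<in>L-D. tf H y = l}" using no D_def by auto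
  have "{y\<in>L. tf G y = l} = {y\<in>L-D. tf G y = l} \<union> {y\<in>D. tf G y = l}" using D_def by auto
  moreover have "card ({y\<in>L-D. tf G y = l} \<union> {y\<in>D. tf G y = l}) = card {y\<in>L-D. tf G y = l} + card {y\<in>D. tf G y = l}"
    by (rule card_Un_disjoint) (use fin D_def in auto)
  ultimately have "RD G l = card {y\<in>L-D. tf G y = l} + card {y\<in>D. tf G y = l}"
    using rd_tf[OF G] by simp
  moreover have "{y\<in>L-D. tf G y = l} = {y\<in>L-D. tf H y = l}" using D_def by auto
  moreover have "RD H l = card {y\<in>L-D. tf H y = l}" using rd_tf[OF H] eq by simp
  moreover have "card {y\<in>D. tf G y = l} > 0"
  proof -
    have "x \<in> {y\<in>D. tf G y = l}" using x D_def by auto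
    moreover have "finite {y\<in>D. tf G y = l}" using fin D_def by auto
    ultimately show ?thesis by (auto simp: card_gt_0_iff)
  qed
  ultimately show False using le by simp
qed

lemma compat_contra:
  assumes G: "tope L R G" and H: "tope L R H" and fin: "finite L" and c: "compatible G H"
    and D: "D = {x\<in>L. tf G x \<noteq> tf H x}" "D \<noteq> {}" "\<forall>x\<in>D. tf G x \<in> tf H ` D"
  shows False
proof -
  have "finite D" using D fin by simp
  then obtain K C where K: "K \<subseteq> D" "K \<noteq> {}" "bij_betw (tf G) K C" "bij_betw (tf H) K C"
    using cycle_lemma[of D "tf G" "tf H"] D by blast
  have KL: "K \<subseteq> L" using K D by auto
  have s1: "(\<lambda>x. (x, tf G x)) ` K \<subseteq> G" using KL tope_tf(1)[OF G] by auto
  have s2: "(\<lambda>x. (x, tf H x)) ` K \<subseteq> H" using KL tope_tf(1)[OF H] by auto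
  have cc: "\<And>I J P Q. P \<subseteq> G \<Longrightarrow> perfect_matching I J P \<Longrightarrow> Q \<subseteq> H \<Longrightarrow> perfect_matching I J Q \<Longrightarrow> P = Q"
    using c unfolding compatible_def by blast
  have eqK: "(\<lambda>x. (x, tf G x)) ` K = (\<lambda>x. (x, tf H x)) ` K"
    by (rule cc[OF s1 pm_graph[OF K(3)] s2 pm_graph[OF K(4)]])
  obtain x where "x \<in> K" using K by auto
  then have "(x, tf G x) \<in> (\<lambda>x. (x, tf G x)) ` K" by (rule imageI)
  then have "(x, tf G x) \<in> (\<lambda>x. (x, tf H x)) ` K" using eqK by simp
  then have "tf G x = tf H x" by auto
  then show False using \<open>x \<in> K\<close> K D by auto
qed

lemma ext_P:
  assumes fin: "finite L" and F: "fam L R X" and C: "Cprop X"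
  shows "Pprop R X"
  unfolding Pprop_def
proof (intro ballI impI subsetI)
  fix G H j j' x0
  assume GX: "G \<in> X" and HX: "H \<in> X" and j: "j \<in> R" "j' \<in> R"
    and eq: "\<forall>k. RD G k + unitv j' k = RD H k + unitv j k" and x0: "x0 \<in> {i. (i, j) \<in> H}"
  have G: "tope L R G" and H: "tope L R H" using GX HX F unfolding fam_def by auto
  show "x0 \<in> {i. (i, j) \<in> G}"
  proof (rule ccontr)
    assume nx: "x0 \<notin> {i. (i, j) \<in> G}"
    have x0L: "x0 \<in> L" and hx0: "tf H x0 = j" using x0 tope_mem[OF H] by auto
    have gx0: "tf G x0 \<noteq> j" using nx tope_mem[OF G] x0L by auto
    define D where "D = {x\<in>L. tf G x \<noteq> tf H x}"
    have x0D: "x0 \<in> D" using x0L hx0 gx0 D_def by auto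
    have "\<forall>x\<in>D. tf G x \<in> tf H ` D"
    proof
      fix x assume xD: "x \<in> D"
      show "tf G x \<in> tf H ` D"
      proof (cases "tf G x = j")
        case True then show ?thesis using x0D hx0 by (metis image_eqI)
      next
        case False
        have "RD G (tf G x) + unitv j' (tf G x) = RD H (tf G x) + unitv j (tf G x)" using eq by blast
        then have "RD G (tf G x) \<le> RD H (tf G x)" using False unfolding unitv_def by auto
        then obtain y where "y \<in> L" "tf G y \<noteq> tf H y" "tf H y = tf G x"
          using fiber_trans[OF G H fin, of "tf G x" x] xD D_def by auto
        then show ?thesis using D_def by (auto simp: image_iff)
      qed
    qed
    moreover have "compatible G H" using C GX HX unfolding Cprop_def by blast
    ultimately show False
      using compat_contra[OF G H fin _ D_def] x0D by blast
  qed
qed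



definition addu :: "('b \<Rightarrow> nat) \<Rightarrow> 'b \<Rightarrow> 'b \<Rightarrow> nat" where
  "addu u a = (\<lambda>k. u k + unitv a k)"

lemma addu_cancel: assumes "addu u a = addu w a" shows "u = w"
proof
  fix k have "addu u a k = addu w a k" using assms by simp
  then show "u k = w k" unfolding addu_def by simp
qed

lemma lp_addu:
  assumes "u \<in> lattice_points R m" "a \<in> R" "finite R"
  shows "addu u a \<in> lattice_points R (Suc m)"
proof -
  have "sum (addu u a) R = sum u R + sum (unitv a) R" unfolding addu_def by (simp add: sum.distrib)
  moreover have "sum (unitv a) R = 1" unfolding unitv_def using assms(2,3) by simp
  ultimately show ?thesis using assms unfolding lattice_points_def addu_def unitv_def by auto
qed

locale leftdel =
  fixes L :: "'a set" and R :: "'b set" and X and i0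
  assumes finL: "finite L" and finR: "finite R" and Rne: "R \<noteq> {}" and i0: "i0 \<in> L"
    and F: "fam L R X" and P: "Pprop R X"
begin

definition L' where "L' = L - {i0}"
definition rs where "rs G = G \<inter> (L' \<times> R)"
definition Tp where "Tp v = inv_into X RD v"

lemma cardL: "card L = Suc (card L')"
  unfolding L'_def by (rule card_Suc_Diff1[OF finL i0, symmetric])

lemma finL': "finite L'" unfolding L'_def using finL by simp

lemma topeX: "G \<in> X \<Longrightarrow> tope L R G" using F unfolding fam_def by auto

lemma Tp: assumes "v \<in> lattice_points R (card L)" shows "Tp v \<in> X" "RD (Tp v) = v"
  using fam_inv[OF F assms] unfolding Tp_def by auto

lemma uniq: "G \<in> X \<Longrightarrow> H \<in> X \<Longrightarrow> RD G = RD H \<Longrightarrow> G = H"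
  using F unfolding fam_def inj_on_def by blast

lemma PP:
  assumes "G \<in> X" "H \<in> X" "a \<in> R" "b \<in> R" "RD G = addu u a" "RD H = addu u b" "(x,a) \<in> H"
  shows "(x,a) \<in> G"
proof -
  have "\<forall>k. RD G k + unitv b k = RD H k + unitv a k" using assms(5,6) unfolding addu_def by simp
  then have "{i. (i,a) \<in> H} \<subseteq> {i. (i,a) \<in> G}"
    using P[unfolded Pprop_def, rule_format, OF assms(1) assms(2) assms(3) assms(4)] by blast
  then show ?thesis using assms(7) by blast
qed

lemma rs_tope: assumes "G \<in> X" shows "tope L' R (rs G)"
  unfolding tope_def
proof (intro conjI ballI)
  have T: "tope L R G" using topeX[OF assms] .
  show "rs G \<subseteq> L' \<times> R" unfolding rs_def by auto
  fix x assume x: "x \<in> L'" then have xL: "x \<in> L" unfolding L'_def by auto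
  show "\<exists>!j. (x,j) \<in> rs G"
  proof (rule ex1I[of _ "tf G x"])
    show "(x, tf G x) \<in> rs G" using tope_tf[OF T xL] x rs_def by auto
    fix j assume "(x,j) \<in> rs G" then show "j = tf G x" using tope_tf_eq(1)[OF T] rs_def by auto
  qed
qed

lemma rs_tf: assumes "G \<in> X" "x \<in> L'" shows "tf (rs G) x = tf G x"
proof -
  have "(x, tf G x) \<in> G" "tf G x \<in> R" using tope_tf[OF topeX[OF assms(1)]] assms(2) L'_def by auto
  then have "(x, tf G x) \<in> rs G" using assms(2) rs_def by auto
  then show ?thesis using tope_tf_eq(1)[OF rs_tope[OF assms(1)]] by blast
qed

lemma rd_rs: assumes "G \<in> X" shows "RD G = addu (RD (rs G)) (tf G i0)"
proof
  fix l
  have T: "tope L R G" using topeX[OF assms] .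
  have "{x\<in>L. tf G x = l} = {x\<in>L'. tf G x = l} \<union> (if tf G i0 = l then {i0} else {})"
    using i0 unfolding L'_def by auto
  moreover have "card ({x\<in>L'. tf G x = l} \<union> (if tf G i0 = l then {i0} else {})) =
      card {x\<in>L'. tf G x = l} + card (if tf G i0 = l then {i0} else {})"
    by (rule card_Un_disjoint) (use finL' L'_def in auto)
  moreover have "{x\<in>L'. tf G x = l} = {x\<in>L'. tf (rs G) x = l}" using rs_tf[OF assms] by auto
  ultimately have "card {x\<in>L. tf G x = l} = card {x\<in>L'. tf (rs G) x = l} + (if tf G i0 = l then 1 else 0)"
    by simp
  then show "RD G l = addu (RD (rs G)) (tf G i0) l"
    unfolding addu_def unitv_def rd_tf[OF T] rd_tf[OF rs_tope[OF assms]] by auto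
qed

lemma rs_lp: assumes "G \<in> X" shows "RD (rs G) \<in> lattice_points R (card L')"
  using tope_lp[OF rs_tope[OF assms] finL' finR] .

lemma surj:
  assumes u: "u \<in> lattice_points R (card L')"
  shows "\<exists>G\<in>X. RD (rs G) = u"
proof -
  obtain b where b: "b \<in> R" using Rne by auto
  define F0 where "F0 = Tp (addu u b)"
  have F0: "F0 \<in> X" "RD F0 = addu u b" using Tp lp_addu[OF u b finR] cardL F0_def by auto
  define c where "c = tf F0 i0"
  have c: "c \<in> R" "(i0, c) \<in> F0" using tope_tf[OF topeX[OF F0(1)] i0] c_def by auto
  define H where "H = Tp (addu u c)"
  have H: "H \<in> X" "RD H = addu u c" using Tp lp_addu[OF u c(1) finR] cardL H_def by auto
  have "(i0, c) \<in> H" using PP[OF H(1) F0(1) c(1) b H(2) F0(2) c(2)] .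
  then have "tf H i0 = c" using tope_tf_eq(1)[OF topeX[OF H(1)]] by blast
  then have "addu u c = addu (RD (rs H)) c" using rd_rs[OF H(1)] H(2) by simp
  then have "RD (rs H) = u" using addu_cancel by metis
  then show ?thesis using H(1) by blast
qed

lemma counting:
  assumes u: "u \<in> lattice_points R (card L')" and KL: "K \<subseteq> L" and CR: "C \<subseteq> R" and Kne: "K \<noteq> {}"
    and cKC: "card K = card C"
    and gh: "\<And>x. x \<in> K \<Longrightarrow> g x \<in> C \<and> h x \<in> C \<and> g x \<noteq> h x \<and>
               (x, g x) \<in> Tp (addu u (g x)) \<and> (x, h x) \<in> Tp (addu u (h x))"
  shows False
proof -
  define A where "A l = {x. (x,l) \<in> Tp (addu u l)}" for l
  have TpX: "Tp (addu u l) \<in> X" and TpRD: "RD (Tp (addu u l)) = addu u l" if "l \<in> R" for l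
    using Tp lp_addu[OF u that finR] cardL by auto
  have AL: "A l \<subseteq> L" if "l \<in> R" for l
    using topeX[OF TpX[OF that]] unfolding A_def tope_def by auto
  have cardA: "card (A l) = u l + 1" if "l \<in> R" for l
  proof -
    have "card (A l) = RD (Tp (addu u l)) l" unfolding A_def RD_def by simp
    then show ?thesis using TpRD[OF that] by (simp add: addu_def unitv_def)
  qed
  have finC: "finite C" using CR finR finite_subset by auto
  have finA: "finite (A l)" if "l \<in> C" for l
  proof -
    have "A l \<subseteq> L" using AL CR that by blast
    then show ?thesis using finL by (rule finite_subset)
  qed
  define N where "N = {x\<in>L. \<exists>l\<in>C. x \<in> A l}"
  have finN: "finite N" using finL N_def by simp
  have finK: "finite K" using KL finL finite_subset by blast
  have "C \<noteq> {}"
  proof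
    assume "C = {}" then have "card K = 0" using cKC by simp
    then show False using Kne finK by simp
  qed
  then obtain c0 where c0: "c0 \<in> C" by blast
  define F0 where "F0 = Tp (addu u c0)"
  have c0R: "c0 \<in> R" using c0 CR by auto
  have F0X: "F0 \<in> X" and F0RD: "RD F0 = addu u c0" using TpX[OF c0R] TpRD[OF c0R] F0_def by auto
  have F0T: "tope L R F0" using topeX[OF F0X] .
  have sub: "{x\<in>L. tf F0 x \<in> C} \<subseteq> N"
  proof
    fix x assume x: "x \<in> {x\<in>L. tf F0 x \<in> C}"
    define l where "l = tf F0 x"
    have lC: "l \<in> C" and lR: "l \<in> R" using x l_def CR by auto
    have "(x, l) \<in> F0" using tope_tf(1)[OF F0T] x l_def by auto
    then have "(x, l) \<in> Tp (addu u l)" using PP[OF TpX[OF lR] F0X lR c0R TpRD[OF lR] F0RD] by blast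
    then show "x \<in> N" using x lC unfolding N_def A_def by auto
  qed
  have "card {x\<in>L. tf F0 x \<in> C} = (\<Sum>l\<in>C. card {x\<in>L. tf F0 x = l})"
    by (rule card_fibers[OF finL finC])
  also have "\<dots> = (\<Sum>l\<in>C. u l + unitv c0 l)"
    by (intro sum.cong refl) (simp add: rd_tf[OF F0T, symmetric] F0RD addu_def)
  also have "\<dots> = sum u C + 1"
    using c0 finC unfolding unitv_def by (simp add: sum.distrib)
  finally have cN: "sum u C + 1 \<le> card N" using card_mono[OF finN sub] by simp
  define SG where "SG = Sigma C A"
  have finSG: "finite SG" unfolding SG_def using finC finA by (intro finite_SigmaI) auto
  have cSG: "card SG = sum u C + card C"
  proof -
    have "card SG = (\<Sum>l\<in>C. card (A l))" unfolding SG_def using finC finA by (intro card_SigmaI) auto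
    also have "\<dots> = (\<Sum>l\<in>C. u l + 1)" using cardA CR by (intro sum.cong) auto
    also have "\<dots> = sum u C + card C" by (simp only: sum.distrib) simp
    finally show ?thesis .
  qed
  define pk where "pk x = (SOME l. l \<in> C \<and> x \<in> A l)" for x
  have pk: "pk x \<in> C \<and> x \<in> A (pk x)" if "x \<in> N" for x
    unfolding pk_def by (rule someI_ex) (use that N_def in auto)
  define E1 where "E1 = (\<lambda>x. (g x, x)) ` K"
  define E2 where "E2 = (\<lambda>x. (h x, x)) ` K"
  define E3 where "E3 = (\<lambda>x. (pk x, x)) ` (N - K)"
  have KN: "K \<subseteq> N" using gh KL unfolding N_def A_def by blast
  have cE1: "card E1 = card K" unfolding E1_def by (rule card_image) (auto simp: inj_on_def)
  have cE2: "card E2 = card K" unfolding E2_def by (rule card_image) (auto simp: inj_on_def)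
  have cE3: "card E3 = card N - card K" unfolding E3_def
    using card_image[of "\<lambda>x. (pk x, x)" "N - K"] card_Diff_subset[OF finK KN] by (auto simp: inj_on_def)
  have d12: "E1 \<inter> E2 = {}" unfolding E1_def E2_def using gh by auto
  have d3: "(E1 \<union> E2) \<inter> E3 = {}" unfolding E1_def E2_def E3_def by auto
  have fin12: "finite E1" "finite E2" "finite E3" unfolding E1_def E2_def E3_def using finK finN by auto
  have "E1 \<union> E2 \<union> E3 \<subseteq> SG" unfolding E1_def E2_def E3_def SG_def A_def using gh pk unfolding A_def by auto
  then have "card (E1 \<union> E2 \<union> E3) \<le> card SG" using card_mono[OF finSG] by blast
  moreover have "card (E1 \<union> E2 \<union> E3) = card E1 + card E2 + card E3"
    using d12 d3 fin12 by (simp add: card_Un_disjoint)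
  moreover have "card K \<le> card N" using card_mono[OF finN KN] .
  ultimately show False using cE1 cE2 cE3 cSG cN cKC by linarith
qed

lemma Tpu: assumes "u \<in> lattice_points R (card L')" "l \<in> R"
  shows "Tp (addu u l) \<in> X" "RD (Tp (addu u l)) = addu u l"
  using Tp lp_addu[OF assms(1) assms(2) finR] cardL by auto

lemma inj_rs:
  assumes GX: "G \<in> X" and HX: "H \<in> X" and eq: "RD (rs G) = RD (rs H)"
  shows "rs G = rs H"
proof (rule ccontr)
  assume ne: "rs G \<noteq> rs H"
  define u where "u = RD (rs G)"
  have u: "u \<in> lattice_points R (card L')" using rs_lp[OF GX] u_def by simp
  have TG: "tope L' R (rs G)" and TH: "tope L' R (rs H)" using rs_tope GX HX by auto
  define j where "j = tf G i0"
  define k where "k = tf H i0"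
  have jR: "j \<in> R" and kR: "k \<in> R" using tope_tf(2)[OF topeX[OF GX] i0] tope_tf(2)[OF topeX[OF HX] i0] j_def k_def by auto
  have RDG: "RD G = addu u j" using rd_rs[OF GX] u_def j_def by simp
  have RDH: "RD H = addu u k" using rd_rs[OF HX] u_def k_def eq by simp
  define D where "D = {x\<in>L'. tf (rs G) x \<noteq> tf (rs H) x}"
  have Dne: "D \<noteq> {}"
  proof
    assume "D = {}"
    then have "\<forall>x\<in>L'. tf (rs G) x = tf (rs H) x" using D_def by auto
    then show False using tope_eq[OF TG TH] ne by blast
  qed
  have Dcl: "\<forall>x\<in>D. tf (rs G) x \<in> tf (rs H) ` D"
  proof
    fix x assume xD: "x \<in> D"
    have "RD (rs G) (tf (rs G) x) \<le> RD (rs H) (tf (rs G) x)" using eq by simp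
    then obtain y where "y \<in> L'" "tf (rs G) y \<noteq> tf (rs H) y" "tf (rs H) y = tf (rs G) x"
      using fiber_trans[OF TG TH finL', of "tf (rs G) x" x] xD D_def by auto
    then show "tf (rs G) x \<in> tf (rs H) ` D" using D_def by (metis (mono_tags, lifting) image_eqI mem_Collect_eq)
  qed
  have "finite D" using finL' D_def by simp
  then obtain K C where K: "K \<subseteq> D" "K \<noteq> {}" "bij_betw (tf (rs G)) K C" "bij_betw (tf (rs H)) K C"
    using cycle_lemma[of D "tf (rs G)" "tf (rs H)"] Dne Dcl by blast
  have KL': "K \<subseteq> L'" using K(1) D_def by auto
  have KL: "K \<subseteq> L" using KL' L'_def by auto
  have gK: "tf (rs G) ` K = C" and hK: "tf (rs H) ` K = C" using K(3,4) unfolding bij_betw_def by auto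
  have CR: "C \<subseteq> R" using gK KL' tope_tf(2)[OF TG] by auto
  have cKC: "card K = card C" using bij_betw_same_card[OF K(3)] .
  show False
  proof (rule counting[OF u KL CR K(2) cKC, of "tf G" "tf H"])
    fix x assume xK: "x \<in> K"
    have xL': "x \<in> L'" using xK KL' by auto
    have xL: "x \<in> L" using xK KL by auto
    have g: "tf G x = tf (rs G) x" and h: "tf H x = tf (rs H) x" using rs_tf GX HX xL' by auto
    have gC: "tf G x \<in> C" using g gK xK by auto
    have hC: "tf H x \<in> C" using h hK xK by auto
    have gh: "tf G x \<noteq> tf H x" using g h xK K(1) D_def by auto
    have gR: "tf G x \<in> R" and hR: "tf H x \<in> R" using gC hC CR by auto
    have "(x, tf G x) \<in> G" using tope_tf(1)[OF topeX[OF GX] xL] .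
    then have 1: "(x, tf G x) \<in> Tp (addu u (tf G x))"
      using PP[OF Tpu(1)[OF u gR] GX gR jR Tpu(2)[OF u gR] RDG] by blast
    have "(x, tf H x) \<in> H" using tope_tf(1)[OF topeX[OF HX] xL] .
    then have 2: "(x, tf H x) \<in> Tp (addu u (tf H x))"
      using PP[OF Tpu(1)[OF u hR] HX hR kR Tpu(2)[OF u hR] RDH] by blast
    show "tf G x \<in> C \<and> tf H x \<in> C \<and> tf G x \<noteq> tf H x \<and>
          (x, tf G x) \<in> Tp (addu u (tf G x)) \<and> (x, tf H x) \<in> Tp (addu u (tf H x))"
      using gC hC gh 1 2 by blast
  qed
qed

lemma Y_fam: "fam L' R (rs ` X)"
  unfolding fam_def
proof (intro conjI)
  show "\<forall>G\<in>rs ` X. tope L' R G" using rs_tope by auto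
  show "RD ` rs ` X = lattice_points R (card L')"
  proof
    show "RD ` rs ` X \<subseteq> lattice_points R (card L')" using rs_lp by auto
    show "lattice_points R (card L') \<subseteq> RD ` rs ` X"
    proof
      fix u assume "u \<in> lattice_points R (card L')"
      then obtain G where "G \<in> X" "RD (rs G) = u" using surj by blast
      then show "u \<in> RD ` rs ` X" by (metis image_eqI)
    qed
  qed
  show "inj_on RD (rs ` X)"
  proof (rule inj_onI)
    fix G' H' assume "G' \<in> rs ` X" "H' \<in> rs ` X" "RD G' = RD H'"
    then obtain G H where "G \<in> X" "H \<in> X" "G' = rs G" "H' = rs H" "RD (rs G) = RD (rs H)" by blast
    then show "G' = H'" using inj_rs by blast
  qed
qed

lemma Pr:
  assumes "G \<in> X" "H \<in> X" "j \<in> R" "j' \<in> R" "\<forall>k. RD G k + unitv j' k = RD H k + unitv j k"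
    "(x,j) \<in> H"
  shows "(x,j) \<in> G"
  using P[unfolded Pprop_def, rule_format, OF assms(1-4) assms(5)[rule_format]] assms(6) by blast

lemma Y_P: "Pprop R (rs ` X)"
  unfolding Pprop_def
proof (intro ballI impI subsetI)
  fix G' H' a b x
  assume G'Y: "G' \<in> rs ` X" and H'Y: "H' \<in> rs ` X" and a: "a \<in> R" and b: "b \<in> R"
    and eq: "\<forall>k. RD G' k + unitv b k = RD H' k + unitv a k" and x: "x \<in> {i. (i, a) \<in> H'}"
  obtain G0 where G0: "G0 \<in> X" "G' = rs G0" using G'Y by blast
  obtain H0 where H0: "H0 \<in> X" "H' = rs H0" using H'Y by blast
  have uG: "RD G' \<in> lattice_points R (card L')" using rs_lp[OF G0(1)] G0(2) by simp
  have uH: "RD H' \<in> lattice_points R (card L')" using rs_lp[OF H0(1)] H0(2) by simp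
  define Pm where "Pm = Tp (addu (RD G') b)"
  have PmX: "Pm \<in> X" and PmRD: "RD Pm = addu (RD G') b" using Tpu[OF uG b] Pm_def by auto
  define c where "c = tf Pm i0"
  have cR: "c \<in> R" and ic: "(i0, c) \<in> Pm" using tope_tf[OF topeX[OF PmX] i0] c_def by auto
  define G2 where "G2 = Tp (addu (RD G') c)"
  have G2X: "G2 \<in> X" and G2RD: "RD G2 = addu (RD G') c" using Tpu[OF uG cR] G2_def by auto
  define H2 where "H2 = Tp (addu (RD H') c)"
  have H2X: "H2 \<in> X" and H2RD: "RD H2 = addu (RD H') c" using Tpu[OF uH cR] H2_def by auto
  have "(i0, c) \<in> G2"
    by (rule Pr[OF G2X PmX cR b _ ic]) (simp add: G2RD PmRD addu_def)
  then have "tf G2 i0 = c" using tope_tf_eq(1)[OF topeX[OF G2X]] by blast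
  then have "addu (RD G') c = addu (RD (rs G2)) c" using rd_rs[OF G2X] G2RD by simp
  then have "RD (rs G2) = RD (rs G0)" using addu_cancel G0(2) by metis
  then have G2e: "rs G2 = G'" using inj_rs[OF G2X G0(1)] G0(2) by simp
  have "(i0, c) \<in> H2"
  proof (rule Pr[OF H2X PmX cR a _ ic], rule allI)
    fix k
    have "RD G' k + unitv b k = RD H' k + unitv a k" using eq by blast
    then show "RD H2 k + unitv a k = RD Pm k + unitv c k" by (simp add: H2RD PmRD addu_def)
  qed
  then have "tf H2 i0 = c" using tope_tf_eq(1)[OF topeX[OF H2X]] by blast
  then have "addu (RD H') c = addu (RD (rs H2)) c" using rd_rs[OF H2X] H2RD by simp
  then have "RD (rs H2) = RD (rs H0)" using addu_cancel H0(2) by metis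
  then have H2e: "rs H2 = H'" using inj_rs[OF H2X H0(1)] H0(2) by simp
  have xa: "(x, a) \<in> H2" "x \<in> L'" using x H2e unfolding rs_def by auto
  have "(x, a) \<in> G2"
  proof (rule Pr[OF G2X H2X a b _ xa(1)], rule allI)
    fix k
    have "RD G' k + unitv b k = RD H' k + unitv a k" using eq by blast
    then show "RD G2 k + unitv b k = RD H2 k + unitv a k" by (simp add: H2RD G2RD addu_def)
  qed
  then have "(x, a) \<in> rs G2" using xa(2) a unfolding rs_def by auto
  then show "x \<in> {i. (i, a) \<in> G'}" using G2e by simp
qed


end


lemma left_restrict:
  assumes "finite L" "finite R" "R \<noteq> {}" "I0 \<subseteq> L" "fam L R X" "Pprop R X"
  shows "fam I0 R ((\<lambda>G. G \<inter> (I0 \<times> R)) ` X) \<and> Pprop R ((\<lambda>G. G \<inter> (I0 \<times> R)) ` X)"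
  using assms
proof (induction "card (L - I0)" arbitrary: L X)
  case 0
  then have "L - I0 = {}" by simp
  then have LI: "L = I0" using 0 by blast
  have "(\<lambda>G. G \<inter> (I0 \<times> R)) ` X = X"
  proof -
    have "\<forall>G\<in>X. G \<inter> (I0 \<times> R) = G" using 0(6) LI unfolding fam_def tope_def by blast
    then show ?thesis by simp
  qed
  then show ?case using 0 LI by simp
next
  case (Suc m)
  have "L - I0 \<noteq> {}"
  proof
    assume e: "L - I0 = {}" have "card (L - I0) = 0" unfolding e by simp
    then show False using Suc(2) by simp
  qed
  then obtain i0 where i0: "i0 \<in> L" "i0 \<notin> I0" by blast
  interpret ld: leftdel L R X i0 using Suc i0 by unfold_locales auto
  have cm: "card (ld.L' - I0) = m"
  proof -
    have "ld.L' - I0 = (L - I0) - {i0}" unfolding ld.L'_def by auto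
    then show ?thesis using Suc(2) i0 Suc(3) by simp
  qed
  have sub: "I0 \<subseteq> ld.L'" using Suc(6) i0 unfolding ld.L'_def by auto
  have IH: "fam I0 R ((\<lambda>G. G \<inter> (I0 \<times> R)) ` ld.rs ` X) \<and> Pprop R ((\<lambda>G. G \<inter> (I0 \<times> R)) ` ld.rs ` X)"
    by (rule Suc(1)[OF cm[symmetric] ld.finL' Suc(4) Suc(5) sub ld.Y_fam ld.Y_P])
  have "(\<lambda>G. G \<inter> (I0 \<times> R)) ` ld.rs ` X = (\<lambda>G. G \<inter> (I0 \<times> R)) ` X"
    unfolding image_image ld.rs_def using \<open>I0 \<subseteq> ld.L'\<close> by (intro image_cong refl) auto
  then show ?case using IH by simp
qed

lemma compat_restr:
  assumes "compatible G H" shows "compatible (G \<inter> A) (H \<inter> B)"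
  unfolding compatible_def
proof (intro allI impI)
  fix I J P Q assume "P \<subseteq> G \<inter> A \<and> perfect_matching I J P \<and> Q \<subseteq> H \<inter> B \<and> perfect_matching I J Q"
  then have "P \<subseteq> G \<and> perfect_matching I J P \<and> Q \<subseteq> H \<and> perfect_matching I J Q" by blast
  then show "P = Q" using assms unfolding compatible_def by blast
qed

lemma Cprop_restr: "Cprop X \<Longrightarrow> Cprop ((\<lambda>G. G \<inter> A) ` X)"
  unfolding Cprop_def using compat_restr by blast

lemma Cprop_mono: "Cprop X \<Longrightarrow> Y \<subseteq> X \<Longrightarrow> Cprop Y"
  unfolding Cprop_def by blast

lemma Pprop_mono: assumes "Pprop R X" "Y \<subseteq> X" "J0 \<subseteq> R" shows "Pprop J0 Y"
  unfolding Pprop_def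
proof (intro ballI impI)
  fix G H j j' assume "G \<in> Y" "H \<in> Y" "j \<in> J0" "j' \<in> J0" "\<forall>k. RD G k + unitv j' k = RD H k + unitv j k"
  then show "{i. (i, j) \<in> H} \<subseteq> {i. (i, j) \<in> G}"
    using assms(1)[unfolded Pprop_def, rule_format, of G H j j'] assms(2,3) by blast
qed

lemma right_restrict:
  assumes finL: "finite L" and finR: "finite R" and J0: "J0 \<subseteq> R" and F: "fam L R X"
  shows "fam L J0 {G\<in>X. G \<subseteq> L \<times> J0}"
  unfolding fam_def
proof (intro conjI)
  have T: "\<And>G. G \<in> X \<Longrightarrow> tope L R G" using F unfolding fam_def by auto
  have finJ: "finite J0" using J0 finR finite_subset by blast
  have TJ: "tope L J0 G" if "G \<in> X" "G \<subseteq> L \<times> J0" for G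
    using T[OF that(1)] that(2) unfolding tope_def by blast
  show "\<forall>G\<in>{G\<in>X. G \<subseteq> L \<times> J0}. tope L J0 G" using TJ by blast
  show "inj_on RD {G\<in>X. G \<subseteq> L \<times> J0}" using F unfolding fam_def inj_on_def by blast
  show "RD ` {G\<in>X. G \<subseteq> L \<times> J0} = lattice_points J0 (card L)"
  proof
    show "RD ` {G\<in>X. G \<subseteq> L \<times> J0} \<subseteq> lattice_points J0 (card L)"
    proof
      fix w assume "w \<in> RD ` {G\<in>X. G \<subseteq> L \<times> J0}"
      then obtain G where "G \<in> X" "G \<subseteq> L \<times> J0" "w = RD G" by blast
      then show "w \<in> lattice_points J0 (card L)" using tope_lp[OF TJ finL finJ] by simp
    qed
    show "lattice_points J0 (card L) \<subseteq> RD ` {G\<in>X. G \<subseteq> L \<times> J0}"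
    proof
      fix v assume v: "v \<in> lattice_points J0 (card L)"
      have z: "\<forall>j. j \<notin> J0 \<longrightarrow> v j = 0" using v unfolding lattice_points_def by auto
      have "sum v J0 = sum v R" using z J0 finR by (intro sum.mono_neutral_left) auto
      then have "v \<in> lattice_points R (card L)" using v z J0 unfolding lattice_points_def by auto
      then obtain G where G: "G \<in> X" "RD G = v" using F unfolding fam_def by (metis imageE)
      have "G \<subseteq> L \<times> J0"
      proof
        fix p assume p: "p \<in> G"
        obtain x l where xl: "p = (x,l)" by (cases p)
        have "x \<in> L" "l \<in> R" using T[OF G(1)] p xl unfolding tope_def by auto
        have "{x. (x,l) \<in> G} \<subseteq> L" using T[OF G(1)] unfolding tope_def by auto
        then have "finite {x. (x,l) \<in> G}" using finL finite_subset by blast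
        moreover have "x \<in> {x. (x,l) \<in> G}" using p xl by simp
        ultimately have "card {x. (x,l) \<in> G} > 0" by (auto simp: card_gt_0_iff)
        then have "RD G l \<noteq> 0" unfolding RD_def by simp
        then have "l \<in> J0" using z G(2) by auto
        then show "p \<in> L \<times> J0" using xl \<open>x \<in> L\<close> by simp
      qed
      then show "v \<in> RD ` {G\<in>X. G \<subseteq> L \<times> J0}" using G by blast
    qed
  qed
qed

lemma minor_eq:
  assumes T: "\<forall>G\<in>X. tope L R G" and I0: "I0 \<subseteq> L" and J0: "J0 \<subseteq> R"
  shows "tope_minor I0 J0 X = {G' \<in> (\<lambda>G. G \<inter> (I0 \<times> R)) ` X. G' \<subseteq> I0 \<times> J0}"
proof
  show "tope_minor I0 J0 X \<subseteq> {G' \<in> (\<lambda>G. G \<inter> (I0 \<times> R)) ` X. G' \<subseteq> I0 \<times> J0}"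
  proof
    fix G' assume "G' \<in> tope_minor I0 J0 X"
    then obtain G where G: "G \<in> X" "G' = G \<inter> (I0 \<times> J0)" "\<forall>i\<in>I0. \<exists>j\<in>J0. (i,j) \<in> G"
      unfolding tope_minor_def by (auto simp only: mem_Collect_eq)
    have TG: "tope L R G" using T G(1) by blast
    have eqG: "G \<inter> (I0 \<times> R) = G \<inter> (I0 \<times> J0)"
    proof
      show "G \<inter> (I0 \<times> R) \<subseteq> G \<inter> (I0 \<times> J0)"
      proof
        fix p assume p: "p \<in> G \<inter> (I0 \<times> R)"
        obtain x y where xy: "p = (x,y)" by (cases p)
        obtain j where "j \<in> J0" "(x,j) \<in> G" using G(3) p xy by auto
        moreover have "(x,y) \<in> G" using p xy by simp
        ultimately have "y = j" using tope_tf_eq(1)[OF TG] by metis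
        then show "p \<in> G \<inter> (I0 \<times> J0)" using p xy \<open>j \<in> J0\<close> by simp
      qed
      show "G \<inter> (I0 \<times> J0) \<subseteq> G \<inter> (I0 \<times> R)" using J0 by auto
    qed
    have "G' \<in> (\<lambda>G. G \<inter> (I0 \<times> R)) ` X" using eqG G(2) by (intro image_eqI[OF _ G(1)]) simp
    moreover have "G' \<subseteq> I0 \<times> J0" using G(2) by simp
    ultimately show "G' \<in> {G' \<in> (\<lambda>G. G \<inter> (I0 \<times> R)) ` X. G' \<subseteq> I0 \<times> J0}" by simp
  qed
  show "{G' \<in> (\<lambda>G. G \<inter> (I0 \<times> R)) ` X. G' \<subseteq> I0 \<times> J0} \<subseteq> tope_minor I0 J0 X"
  proof
    fix G' assume "G' \<in> {G' \<in> (\<lambda>G. G \<inter> (I0 \<times> R)) ` X. G' \<subseteq> I0 \<times> J0}"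
    then obtain G where G: "G \<in> X" "G' = G \<inter> (I0 \<times> R)" "G' \<subseteq> I0 \<times> J0" by blast
    have TG: "tope L R G" using T G(1) by blast
    have a: "\<forall>i\<in>I0. \<exists>j\<in>J0. (i,j) \<in> G"
    proof
      fix i assume i: "i \<in> I0"
      then have "(i, tf G i) \<in> G" "tf G i \<in> R" using tope_tf[OF TG] I0 by auto
      then have "(i, tf G i) \<in> G'" using G(2) i by auto
      then show "\<exists>j\<in>J0. (i,j) \<in> G" using G(2,3) by auto
    qed
    have "G' = G \<inter> (I0 \<times> J0)" using G J0 by auto
    then show "G' \<in> tope_minor I0 J0 X" unfolding tope_minor_def using G(1) a by blast
  qed
qed



lemma pm_fst: assumes "perfect_matching I J P" shows "fst ` P = I" "snd ` P = J"
proof -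
  show "fst ` P = I"
  proof
    show "fst ` P \<subseteq> I" using assms unfolding perfect_matching_def by auto
    show "I \<subseteq> fst ` P"
    proof
      fix x assume "x \<in> I"
      then obtain y where "(x,y) \<in> P" using assms unfolding perfect_matching_def by blast
      then show "x \<in> fst ` P" by (metis fst_conv image_eqI)
    qed
  qed
  show "snd ` P = J"
  proof
    show "snd ` P \<subseteq> J" using assms unfolding perfect_matching_def by auto
    show "J \<subseteq> snd ` P"
    proof
      fix y assume "y \<in> J"
      then obtain x where "(x,y) \<in> P" using assms unfolding perfect_matching_def by blast
      then show "y \<in> snd ` P" by (metis snd_conv image_eqI)
    qed
  qed
qed

lemma pm_dom: assumes "perfect_matching I J P" "perfect_matching I' J' P" shows "I = I' \<and> J = J'"
proof -
  have "fst ` P = I" "snd ` P = J" using pm_fst[OF assms(1)] by auto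
  moreover have "fst ` P = I'" "snd ` P = J'" using pm_fst[OF assms(2)] by auto
  ultimately show ?thesis by simp
qed

lemma pm_sub_eq:
  assumes P: "perfect_matching I J P" and Q: "perfect_matching I J Q" and sub: "Q \<subseteq> P"
  shows "P = Q"
proof
  show "P \<subseteq> Q"
  proof
    fix p assume p: "p \<in> P"
    obtain x y where xy: "p = (x,y)" by (cases p)
    have x: "x \<in> I" using P p xy unfolding perfect_matching_def by auto
    then obtain y' where y': "(x,y') \<in> Q" using Q unfolding perfect_matching_def by blast
    then have "(x,y') \<in> P" using sub by auto
    then have "y' = y" using P x p xy unfolding perfect_matching_def by blast
    then show "p \<in> Q" using y' xy by simp
  qed
  show "Q \<subseteq> P" using sub .
qed

lemma pm_card:
  assumes "finite I" "finite J" "perfect_matching I J P" shows "card I = card J"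
proof -
  have "inj_on fst P"
  proof (rule inj_onI)
    fix p q assume pq: "p \<in> P" "q \<in> P" "fst p = fst q"
    obtain x y where p: "p = (x,y)" by (cases p)
    obtain x' y' where q: "q = (x',y')" by (cases q)
    have "x \<in> I" using pq(1) p assms(3) unfolding perfect_matching_def by auto
    then have "\<exists>!j. (x,j) \<in> P" using assms(3) unfolding perfect_matching_def by auto
    moreover have "(x,y) \<in> P" "(x,y') \<in> P" using pq p q by auto
    ultimately have "y = y'" by blast
    then show "p = q" using p q pq(3) by simp
  qed
  moreover have "inj_on snd P"
  proof (rule inj_onI)
    fix p q assume pq: "p \<in> P" "q \<in> P" "snd p = snd q"
    obtain x y where p: "p = (x,y)" by (cases p)
    obtain x' y' where q: "q = (x',y')" by (cases q)
    have "y \<in> J" using pq(1) p assms(3) unfolding perfect_matching_def by auto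
    then have "\<exists>!i. (i,y) \<in> P" using assms(3) unfolding perfect_matching_def by auto
    moreover have "(x,y) \<in> P" "(x',y) \<in> P" using pq p q by auto
    ultimately have "x = x'" by blast
    then show "p = q" using p q pq(3) by simp
  qed
  ultimately have "card (fst ` P) = card (snd ` P)" by (simp add: card_image)
  then show ?thesis using pm_fst[OF assms(3)] by simp
qed

lemma pm_restr:
  assumes "perfect_matching I J M"
  shows "perfect_matching (fst ` (M \<inter> A)) (snd ` (M \<inter> A)) (M \<inter> A)"
  unfolding perfect_matching_def
proof (intro conjI ballI)
  show "M \<inter> A \<subseteq> fst ` (M \<inter> A) \<times> snd ` (M \<inter> A)"
  proof
    fix p assume "p \<in> M \<inter> A"
    then show "p \<in> fst ` (M \<inter> A) \<times> snd ` (M \<inter> A)"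
      using imageI[of p "M \<inter> A" fst] imageI[of p "M \<inter> A" snd] by (simp add: mem_Times_iff)
  qed
next
  fix x assume "x \<in> fst ` (M \<inter> A)"
  then obtain y where y: "(x,y) \<in> M \<inter> A" by auto
  then have "x \<in> I" using assms unfolding perfect_matching_def by auto
  then have "\<And>y'. (x,y') \<in> M \<Longrightarrow> y' = y" using y assms unfolding perfect_matching_def by blast
  then show "\<exists>!j. (x,j) \<in> M \<inter> A" using y by blast
next
  fix y assume "y \<in> snd ` (M \<inter> A)"
  then obtain x where x: "(x,y) \<in> M \<inter> A" by auto
  then have "y \<in> J" using assms unfolding perfect_matching_def by auto
  then have "\<And>x'. (x',y) \<in> M \<Longrightarrow> x' = x" using x assms unfolding perfect_matching_def by blast
  then show "\<exists>!i. (i,y) \<in> M \<inter> A" using x by blast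
qed

lemma me_mono:
  assumes "matching_ensemble L R M" "L' \<subseteq> L" "R' \<subseteq> R"
  shows "matching_ensemble L' R' M"
proof -
  note c = assms(1)[unfolded matching_ensemble_def]
  note c1 = conjunct1[OF c]
  note c2 = conjunct1[OF conjunct2[OF c]]
  note c3 = conjunct1[OF conjunct2[OF conjunct2[OF c]]]
  note c4 = conjunct2[OF conjunct2[OF conjunct2[OF c]]]
  show ?thesis unfolding matching_ensemble_def
  proof (intro conjI allI impI)
    fix I J assume a: "I \<subseteq> L'" "J \<subseteq> R'" "card I = card J"
    have b: "I \<subseteq> L" "J \<subseteq> R" using a assms(2,3) by auto
    show "perfect_matching I J (M I J)" by (rule c1[rule_format, OF b a(3)])
  next
    fix I J I' J' assume a: "I \<subseteq> L'" "J \<subseteq> R'" "card I = card J" "I' \<subseteq> I" "J' \<subseteq> J"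
      "\<exists>P. P \<subseteq> M I J \<and> perfect_matching I' J' P"
    have b: "I \<subseteq> L" "J \<subseteq> R" using a assms(2,3) by auto
    show "M I' J' \<subseteq> M I J" by (rule c2[rule_format, OF b a(3-6)])
  next
    fix I J assume a: "I \<subseteq> L'" "J \<subseteq> R'" "card I = card J + 1"
    have b: "I \<subseteq> L" "J \<subseteq> R" using a assms(2,3) by auto
    show "let E = \<Union>{M I' J | I'. I' \<subseteq> I \<and> card I' = card J}
          in spanning_tree I J E \<and> (\<forall>j\<in>J. RD E j = 2)" by (rule c3[rule_format, OF b a(3)])
  next
    fix I J assume a: "I \<subseteq> L'" "J \<subseteq> R'" "card I + 1 = card J"
    have b: "I \<subseteq> L" "J \<subseteq> R" using a assms(2,3) by auto
    show "let E = \<Union>{M I J' | J'. J' \<subseteq> J \<and> card J' = card I}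
          in spanning_tree I J E \<and> (\<forall>i\<in>I. ldeg E i = 2)" by (rule c4[rule_format, OF b a(3)])
  qed
qed



lemma partb:
  fixes n d :: nat and I0 J0 :: "nat set"
  assumes I0: "I0 \<subseteq> {1..n}" and J0: "J0 \<subseteq> {1..d}" and ME: "matching_ensemble {1..n} {1..d} M"
  shows "{M I J \<inter> (I0 \<times> J0) | I J. I \<subseteq> {1..n} \<and> J \<subseteq> {1..d} \<and> card I = card J}
        = {M I J | I J. I \<subseteq> I0 \<and> J \<subseteq> J0 \<and> card I = card J} \<and>
      (\<forall>I J. I \<subseteq> I0 \<longrightarrow> J \<subseteq> J0 \<longrightarrow> card I = card J \<longrightarrow>
         (\<exists>!P. P \<in> {M I J | I J. I \<subseteq> I0 \<and> J \<subseteq> J0 \<and> card I = card J}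
               \<and> perfect_matching I J P)) \<and>
      matching_ensemble I0 J0 M"
proof (intro conjI)
  note c = ME[unfolded matching_ensemble_def]
  note c1 = conjunct1[OF c]
  note c2 = conjunct1[OF conjunct2[OF c]]
  have m1: "perfect_matching I J (M I J)" if "I \<subseteq> {1..n}" "J \<subseteq> {1..d}" "card I = card J" for I J
    by (rule c1[rule_format, OF that])
  have m2: "M I' J' \<subseteq> M I J" if "I \<subseteq> {1..n}" "J \<subseteq> {1..d}" "card I = card J" "I' \<subseteq> I" "J' \<subseteq> J"
    "P \<subseteq> M I J" "perfect_matching I' J' P" for I J I' J' P
    using c2[rule_format, OF that(1-5)] that(6,7) by blast
  show "matching_ensemble I0 J0 M" by (rule me_mono[OF ME I0 J0])
  show "{M I J \<inter> (I0 \<times> J0) | I J. I \<subseteq> {1..n} \<and> J \<subseteq> {1..d} \<and> card I = card J}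
        = {M I J | I J. I \<subseteq> I0 \<and> J \<subseteq> J0 \<and> card I = card J}"
  proof
    show "{M I J \<inter> (I0 \<times> J0) | I J. I \<subseteq> {1..n} \<and> J \<subseteq> {1..d} \<and> card I = card J}
        \<subseteq> {M I J | I J. I \<subseteq> I0 \<and> J \<subseteq> J0 \<and> card I = card J}"
    proof
      fix P assume "P \<in> {M I J \<inter> (I0 \<times> J0) | I J. I \<subseteq> {1..n} \<and> J \<subseteq> {1..d} \<and> card I = card J}"
      then obtain I J where IJ: "P = M I J \<inter> (I0 \<times> J0)" "I \<subseteq> {1..n}" "J \<subseteq> {1..d}" "card I = card J"
        by blast
      define I' where "I' = fst ` P"
      define J' where "J' = snd ` P"
      have pmIJ: "perfect_matching I J (M I J)" by (rule m1[OF IJ(2-4)])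
      have pmP: "perfect_matching I' J' P" using pm_restr[OF pmIJ, of "I0 \<times> J0"] IJ(1) I'_def J'_def by simp
      have MIJ: "M I J \<subseteq> I \<times> J" using pmIJ unfolding perfect_matching_def by blast
      have I'I: "I' \<subseteq> I" and I'0: "I' \<subseteq> I0" using MIJ IJ(1) I'_def by auto
      have J'J: "J' \<subseteq> J" and J'0: "J' \<subseteq> J0" using MIJ IJ(1) J'_def by auto
      have fI': "finite I'" by (rule finite_subset[OF subset_trans[OF I'I IJ(2)] finite_atLeastAtMost])
      have fJ': "finite J'" by (rule finite_subset[OF subset_trans[OF J'J IJ(3)] finite_atLeastAtMost])
      have cc: "card I' = card J'" by (rule pm_card[OF fI' fJ' pmP])
      have "P \<subseteq> M I J" using IJ(1) by simp
      then have "M I' J' \<subseteq> M I J" by (rule m2[OF IJ(2-4) I'I J'J _ pmP])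
      moreover have pm': "perfect_matching I' J' (M I' J')"
        by (rule m1[OF subset_trans[OF I'I IJ(2)] subset_trans[OF J'J IJ(3)] cc])
      moreover have "M I' J' \<subseteq> I0 \<times> J0" using pm' I'0 J'0 unfolding perfect_matching_def by blast
      ultimately have "M I' J' \<subseteq> P" using IJ(1) by (simp add: subset_iff)
      then have "P = M I' J'" by (rule pm_sub_eq[OF pmP pm'])
      then show "P \<in> {M I J | I J. I \<subseteq> I0 \<and> J \<subseteq> J0 \<and> card I = card J}"
        unfolding mem_Collect_eq by (intro exI[of _ I'] exI[of _ J'] conjI I'0 J'0 cc)
    qed
    show "{M I J | I J. I \<subseteq> I0 \<and> J \<subseteq> J0 \<and> card I = card J}
        \<subseteq> {M I J \<inter> (I0 \<times> J0) | I J. I \<subseteq> {1..n} \<and> J \<subseteq> {1..d} \<and> card I = card J}"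
    proof
      fix P assume "P \<in> {M I J | I J. I \<subseteq> I0 \<and> J \<subseteq> J0 \<and> card I = card J}"
      then obtain I J where IJ: "P = M I J" "I \<subseteq> I0" "J \<subseteq> J0" "card I = card J" by blast
      have b: "I \<subseteq> {1..n}" "J \<subseteq> {1..d}" using IJ I0 J0 by auto
      have "M I J \<subseteq> I \<times> J" using m1[OF b IJ(4)] unfolding perfect_matching_def by blast
      then have "M I J \<subseteq> I0 \<times> J0" using IJ(2,3) by auto
      then have "P = M I J \<inter> (I0 \<times> J0)" using IJ(1) by auto
      then show "P \<in> {M I J \<inter> (I0 \<times> J0) | I J. I \<subseteq> {1..n} \<and> J \<subseteq> {1..d} \<and> card I = card J}"
        unfolding mem_Collect_eq by (intro exI[of _ I] exI[of _ J] conjI b IJ(4))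
    qed
  qed
  show "\<forall>I J. I \<subseteq> I0 \<longrightarrow> J \<subseteq> J0 \<longrightarrow> card I = card J \<longrightarrow>
         (\<exists>!P. P \<in> {M I J | I J. I \<subseteq> I0 \<and> J \<subseteq> J0 \<and> card I = card J}
               \<and> perfect_matching I J P)"
  proof (intro allI impI)
    fix I J assume a: "I \<subseteq> I0" "J \<subseteq> J0" "card I = card J"
    have b: "I \<subseteq> {1..n}" "J \<subseteq> {1..d}" using a I0 J0 by auto
    show "\<exists>!P. P \<in> {M I J | I J. I \<subseteq> I0 \<and> J \<subseteq> J0 \<and> card I = card J} \<and> perfect_matching I J P"
    proof (rule ex1I[of _ "M I J"])
      show "M I J \<in> {M I J | I J. I \<subseteq> I0 \<and> J \<subseteq> J0 \<and> card I = card J} \<and> perfect_matching I J (M I J)"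
        unfolding mem_Collect_eq by (intro conjI exI[of _ I] exI[of _ J] refl a m1[OF b a(3)])
      fix P assume P: "P \<in> {M I J | I J. I \<subseteq> I0 \<and> J \<subseteq> J0 \<and> card I = card J} \<and> perfect_matching I J P"
      then obtain I' J' where IJ: "P = M I' J'" "I' \<subseteq> I0" "J' \<subseteq> J0" "card I' = card J'" by blast
      have b': "I' \<subseteq> {1..n}" "J' \<subseteq> {1..d}" using IJ I0 J0 by auto
      have "perfect_matching I' J' P" unfolding IJ(1) by (rule m1[OF b' IJ(4)])
      then have "I = I' \<and> J = J'" by (rule pm_dom[OF conjunct2[OF P]])
      then show "P = M I J" using IJ(1) by simp
    qed
  qed
qed

lemma partc:
  fixes n d :: nat and I0 J0 :: "nat set"
  assumes I0: "I0 \<subseteq> {1..n}" and J0: "J0 \<subseteq> {1..d}" "J0 \<noteq> {}"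
    and T: "ext_tope_arrangement {1..n} {1..d} T"
  shows "\<exists>T'. ext_tope_arrangement I0 J0 T' \<and>
         tope_minor I0 J0 (T ` lattice_points {1..d} n) = T' ` lattice_points J0 (card I0)"
proof -
  define X where "X = T ` lattice_points {1..d} n"
  have e: "card {1..n} = n" by simp
  have FC: "fam {1..n} {1..d} X \<and> Cprop X" using ext_to_set[OF T] unfolding e X_def .
  have FX: "fam {1..n} {1..d} X" and CX: "Cprop X" using FC by auto
  have PX: "Pprop {1..d} X" by (rule ext_P[OF _ FX CX]) simp
  have dne: "{1..d} \<noteq> {}" using J0 by auto
  define X1 where "X1 = (\<lambda>G. G \<inter> (I0 \<times> {1..d})) ` X"
  have F1: "fam I0 {1..d} X1" using left_restrict[OF _ _ dne I0 FX PX] unfolding X1_def by simp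
  have C1: "Cprop X1" using Cprop_restr[OF CX] unfolding X1_def .
  have finI0: "finite I0" using I0 finite_subset by blast
  define X2 where "X2 = {G\<in>X1. G \<subseteq> I0 \<times> J0}"
  have F2: "fam I0 J0 X2" using right_restrict[OF finI0 _ J0(1) F1] unfolding X2_def by simp
  have C2: "Cprop X2" by (rule Cprop_mono[OF C1]) (auto simp: X2_def)
  have TX: "\<forall>G\<in>X. tope {1..n} {1..d} G" using FX unfolding fam_def by blast
  have mi: "tope_minor I0 J0 X = X2" unfolding minor_eq[OF TX I0 J0(1)] X2_def X1_def ..
  obtain T' where T': "ext_tope_arrangement I0 J0 T'" "X2 = T' ` lattice_points J0 (card I0)"
    using set_to_ext[OF F2 C2] by blast
  show ?thesis unfolding X_def[symmetric] mi using T' by blast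
qed

lemma partd:
  fixes n d :: nat and I0 J0 :: "nat set"
  assumes I0: "I0 \<subseteq> {1..n}" and J0: "J0 \<subseteq> {1..d}" "J0 \<noteq> {}"
    and T: "pre_trianguloid {1..n} {1..d} T"
  shows "\<exists>T'. pre_trianguloid I0 J0 T' \<and>
         tope_minor I0 J0 (T ` lattice_points {1..d} n) = T' ` lattice_points J0 (card I0)"
proof -
  define X where "X = T ` lattice_points {1..d} n"
  have e: "card {1..n} = n" by simp
  have FP: "fam {1..n} {1..d} X \<and> Pprop {1..d} X" using pre_to_set[OF T] unfolding e X_def .
  have FX: "fam {1..n} {1..d} X" and PX: "Pprop {1..d} X" using FP by auto
  have dne: "{1..d} \<noteq> {}" using J0 by auto
  define X1 where "X1 = (\<lambda>G. G \<inter> (I0 \<times> {1..d})) ` X"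
  have FP1: "fam I0 {1..d} X1 \<and> Pprop {1..d} X1" using left_restrict[OF _ _ dne I0 FX PX] unfolding X1_def by simp
  have F1: "fam I0 {1..d} X1" and P1: "Pprop {1..d} X1" using FP1 by auto
  have finI0: "finite I0" using I0 finite_subset by blast
  define X2 where "X2 = {G\<in>X1. G \<subseteq> I0 \<times> J0}"
  have F2: "fam I0 J0 X2" using right_restrict[OF finI0 _ J0(1) F1] unfolding X2_def by simp
  have P2: "Pprop J0 X2" by (rule Pprop_mono[OF P1 _ J0(1)]) (auto simp: X2_def)
  have TX: "\<forall>G\<in>X. tope {1..n} {1..d} G" using FX unfolding fam_def by blast
  have mi: "tope_minor I0 J0 X = X2" unfolding minor_eq[OF TX I0 J0(1)] X2_def X1_def ..
  obtain T' where T': "pre_trianguloid I0 J0 T'" "X2 = T' ` lattice_points J0 (card I0)"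
    using set_to_pre[OF F2 P2] by blast
  show ?thesis unfolding X_def[symmetric] mi using T' by blast
qed



theorem mainTheorem6:
  fixes n d :: nat and I0 J0 :: "nat set"
  assumes "I0 \<subseteq> {1..n}" "I0 \<noteq> {}" "J0 \<subseteq> {1..d}" "J0 \<noteq> {}"
  shows
   "(\<forall>M. matching_ensemble {1..n} {1..d} M \<longrightarrow>
      {M I J \<inter> (I0 \<times> J0) | I J. I \<subseteq> {1..n} \<and> J \<subseteq> {1..d} \<and> card I = card J}
        = {M I J | I J. I \<subseteq> I0 \<and> J \<subseteq> J0 \<and> card I = card J} \<and>
      (\<forall>I J. I \<subseteq> I0 \<longrightarrow> J \<subseteq> J0 \<longrightarrow> card I = card J \<longrightarrow>
         (\<exists>!P. P \<in> {M I J | I J. I \<subseteq> I0 \<and> J \<subseteq> J0 \<and> card I = card J}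
               \<and> perfect_matching I J P)) \<and>
      matching_ensemble I0 J0 M)
    \<and>
    (\<forall>T. ext_tope_arrangement {1..n} {1..d} T \<longrightarrow>
      (\<exists>T'. ext_tope_arrangement I0 J0 T' \<and>
         tope_minor I0 J0 (T ` lattice_points {1..d} n) = T' ` lattice_points J0 (card I0)))
    \<and>
    (\<forall>T. pre_trianguloid {1..n} {1..d} T \<longrightarrow>
      (\<exists>T'. pre_trianguloid I0 J0 T' \<and>
         tope_minor I0 J0 (T ` lattice_points {1..d} n) = T' ` lattice_points J0 (card I0)))"
proof (intro conjI)
  show "\<forall>M. matching_ensemble {1..n} {1..d} M \<longrightarrow>
      {M I J \<inter> (I0 \<times> J0) | I J. I \<subseteq> {1..n} \<and> J \<subseteq> {1..d} \<and> card I = card J}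
        = {M I J | I J. I \<subseteq> I0 \<and> J \<subseteq> J0 \<and> card I = card J} \<and>
      (\<forall>I J. I \<subseteq> I0 \<longrightarrow> J \<subseteq> J0 \<longrightarrow> card I = card J \<longrightarrow>
         (\<exists>!P. P \<in> {M I J | I J. I \<subseteq> I0 \<and> J \<subseteq> J0 \<and> card I = card J}
               \<and> perfect_matching I J P)) \<and>
      matching_ensemble I0 J0 M"
    by (intro allI impI) (rule partb[OF assms(1) assms(3)])
  show "\<forall>T. ext_tope_arrangement {1..n} {1..d} T \<longrightarrow>
      (\<exists>T'. ext_tope_arrangement I0 J0 T' \<and>
         tope_minor I0 J0 (T ` lattice_points {1..d} n) = T' ` lattice_points J0 (card I0))"
    by (intro allI impI) (rule partc[OF assms(1) assms(3) assms(4)])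
  show "\<forall>T. pre_trianguloid {1..n} {1..d} T \<longrightarrow>
      (\<exists>T'. pre_trianguloid I0 J0 T' \<and>
         tope_minor I0 J0 (T ` lattice_points {1..d} n) = T' ` lattice_points J0 (card I0))"
    by (intro allI impI) (rule partd[OF assms(1) assms(3) assms(4)])
qed

end
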